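(* Let $N\ge1$, $T>0$ and $c\in(0,1]$. Let $\mathcal{A}^\ast=(a_1,a_2,\dots)$ and $\mathcal{B}^\ast=(b_1,b_2,\dots)$ be types (partitions of $N$) such that \[ |a_i-b_i|\le\frac{3N}{T}+\frac{a_i+b_i}{T^c}\quad\text{for all } i. \] Let $\mathcal{A}_0=\mathcal{A}^\ast,\mathcal{A}_1,\dots,\mathcal{A}_L$ be the types produced by the chopping procedure. Then for every $\ell\in[L]$ with $\ell\le(\log_2T)-2$, we have $\|\mathcal{A}_\ell-\mathcal{A}_{\ell-1}\|\le\frac{8N}{T^c}$.
   Context: A type is a list $(a_1,\dots,a_u)$ of positive integers with $a_1\ge\dots\ge a_u$ and $\sum a_i=N$, with the convention $a_i=0$ for $i>u$. A row-array is a list of $2N$ nonnegative integers $(a_1,\dots,a_{2N})$ (not necessarily sorted) with sum $N$; $\operatorname{type}(a_1,\dots,a_{2N})$ is the type obtained by sorting the nonzero entries in descending order. Every type is regarded as a row-array by padding with zeros. For types $\mathcal{A}=(a_i)$, $\mathcal{B}=(b_i)$ define $\|\mathcal{A}-\mathcal{B}\|:=\frac12\sum_{i=1}^N|a_i-b_i|$. Chopping procedure: let $L:=\lceil\log_2N\rceil$ and let $P$ be the least power of $2$ with $P\ge N$. Initialize the row-array $(a_1,\dots,a_{2N})$ to $\mathcal{A}^\ast$ and let $(b_1,\dots,b_{2N})$ be $\mathcal{B}^\ast$ (fixed throughout). For $\ell=1,\dots,L$: for every $i\in[2N]$ such that $a_i-b_i\ge P/2^\ell$ and $a_i>P/2^\ell$,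 set $a_i:=a_i-P/2^\ell$, then find some $j\in[2N]$ with $a_j=b_j=0$ and set $a_j:=P/2^\ell$; after processing all such $i$, set $\mathcal{A}_\ell:=\operatorname{type}(a_1,\dots,a_{2N})$. *)

theory Defs
  imports Complex_Main
begin

text \<open>A type of N: list of positive integers, weakly decreasing, summing to N.
  Entries are 0-indexed: the paper's a_i is entry (i-1).\<close>
definition is_type :: "nat \<Rightarrow> nat list \<Rightarrow> bool" where
  "is_type N xs \<longleftrightarrow> sorted_wrt (\<ge>) xs \<and> 0 \<notin> set xs \<and> sum_list xs = N"

definition ent :: "nat list \<Rightarrow> nat \<Rightarrow> nat" where
  "ent xs i = (if i < length xs then xs ! i else 0)"

text \<open>Row-arrays of length 2N are functions on positions 0..<2N (zero elsewhere).
  The type of a row-array: its nonzero entries sorted in descending order.\<close>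
definition type_of_arr :: "nat \<Rightarrow> (nat \<Rightarrow> nat) \<Rightarrow> nat list" where
  "type_of_arr N a = rev (sort (filter (\<lambda>x. x \<noteq> 0) (map a [0..<2*N])))"

definition pad :: "nat \<Rightarrow> nat list \<Rightarrow> (nat \<Rightarrow> nat)" where
  "pad N xs = (\<lambda>i. if i < 2*N then ent xs i else 0)"

definition type_dist :: "nat \<Rightarrow> nat list \<Rightarrow> nat list \<Rightarrow> real" where
  "type_dist N A B = (1/2) * (\<Sum>i<N. \<bar>real (ent A i) - real (ent B i)\<bar>)"

definition chopL :: "nat \<Rightarrow> nat" where
  "chopL N = nat \<lceil>log 2 (real N)\<rceil>"

definition chopP :: "nat \<Rightarrow> nat" where
  "chopP N = (LEAST p. (\<exists>k. p = 2 ^ k) \<and> N \<le> p)"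

text \<open>One level of the chopping procedure with chunk size s (= P/2^l), against fixed b.
  All i with a_i - b_i >= s and a_i > s are chopped; each chopped piece is placed at a
  distinct position j with a_j = b_j = 0 (chosen nondeterministically, via injective f).\<close>
definition chop_step :: "nat \<Rightarrow> nat \<Rightarrow> (nat \<Rightarrow> nat) \<Rightarrow> (nat \<Rightarrow> nat) \<Rightarrow> (nat \<Rightarrow> nat) \<Rightarrow> bool" where
  "chop_step N s b a a' \<longleftrightarrow>
     (\<exists>f. let I = {i. i < 2*N \<and> a i \<ge> b i + s \<and> a i > s} in
        inj_on f I \<and> f ` I \<subseteq> {j. j < 2*N \<and> a j = 0 \<and> b j = 0} \<and>
        a' = (\<lambda>k. if k \<in> I then a k - s else if k \<in> f ` I then s else a k))"

definition chop_run :: "nat \<Rightarrow> nat list \<Rightarrow> nat list \<Rightarrow> (nat \<Rightarrow> nat \<Rightarrow> nat) \<Rightarrow> bool" where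
  "chop_run N A B arr \<longleftrightarrow> arr 0 = pad N A \<and>
     (\<forall>l\<in>{1..chopL N}. chop_step N (chopP N div 2 ^ l) (pad N B) (arr (l - 1)) (arr l))"

end

theory Submission
  imports Defs "HOL-Library.Multiset"
begin

lemma ind_sum_le:
  fixes a b M :: nat assumes "a \<le> b" "b \<le> M"
  shows "(\<Sum>t<M. \<bar>of_bool (t<a) - of_bool (t<b) :: real\<bar>) = real b - real a"
proof -
  have "(\<Sum>t<M. \<bar>of_bool (t<a) - of_bool (t<b) :: real\<bar>) = (\<Sum>t<M. of_bool (t \<in> {a..<b}))"
    by (rule sum.cong) (use assms in auto)
  also have "\<dots> = real (card ({..<M} \<inter> {a..<b}))"
    by (simp add: sum.If_cases atLeastLessThan_def lessThan_def atLeast_def Int_def)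
  also have "{..<M} \<inter> {a..<b} = {a..<b}" using assms by auto
  finally show ?thesis using assms by simp
qed

lemma ind_sum:
  fixes a b M :: nat assumes "a \<le> M" "b \<le> M"
  shows "(\<Sum>t<M. \<bar>of_bool (t<a) - of_bool (t<b) :: real\<bar>) = \<bar>real a - real b\<bar>"
proof (cases "a \<le> b")
  case True
  have eq: "(\<Sum>t<M. \<bar>of_bool (t<a) - of_bool (t<b) :: real\<bar>) = real b - real a"
    by (rule ind_sum_le[OF True assms(2)])
  show ?thesis by (simp only: eq) (use True in \<open>simp add: abs_if\<close>)
next
  case False
  hence "b \<le> a" by simp
  have eq: "(\<Sum>t<M. \<bar>of_bool (t<b) - of_bool (t<a) :: real\<bar>) = real a - real b"
    by (rule ind_sum_le[OF \<open>b \<le> a\<close> assms(1)])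
  have "(\<Sum>t<M. \<bar>of_bool (t<a) - of_bool (t<b) :: real\<bar>) = (\<Sum>t<M. \<bar>of_bool (t<b) - of_bool (t<a) :: real\<bar>)"
    by (simp add: abs_minus_commute)
  thus ?thesis by (simp only: eq) (use \<open>b \<le> a\<close> in \<open>simp add: abs_if\<close>)
qed

lemma downclosed:
  fixes S :: "nat set" assumes "finite S" "\<And>i j. i \<in> S \<Longrightarrow> j \<le> i \<Longrightarrow> j \<in> S"
  shows "S = {..<card S}"
proof -
  have sub: "S \<subseteq> {..<card S}"
  proof
    fix i assume "i \<in> S"
    hence "{..i} \<subseteq> S" using assms(2) by auto
    hence "card {..i} \<le> card S" using assms(1) card_mono by blast
    thus "i \<in> {..<card S}" by simp
  qed
  show ?thesis using card_subset_eq[OF _ sub] by simp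
qed

definition cnt :: "nat \<Rightarrow> (nat \<Rightarrow> nat) \<Rightarrow> nat \<Rightarrow> nat" where
  "cnt N x t = card {i. i < 2*N \<and> t < x i}"

lemma type_sorted: "sorted_wrt (\<ge>) (type_of_arr N x)"
  unfolding type_of_arr_def by (simp add: sorted_wrt_rev)

lemma type_set: "set (type_of_arr N x) \<subseteq> x ` {..<2*N}"
  unfolding type_of_arr_def by auto

lemma type_len: "length (type_of_arr N x) \<le> 2*N"
  unfolding type_of_arr_def
  by (metis diff_zero length_filter_le length_map length_rev length_sort length_upt)

lemma type_cnt: "card {j. j < length (type_of_arr N x) \<and> t < type_of_arr N x ! j} = cnt N x t"
proof -
  let ?L = "filter (\<lambda>v. v \<noteq> 0) (map x [0..<2*N])"
  have "card {j. j < length (type_of_arr N x) \<and> t < type_of_arr N x ! j}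
     = length (filter ((<) t) (type_of_arr N x))"
    by (simp add: length_filter_conv_card)
  also have "\<dots> = size (mset (filter ((<) t) (type_of_arr N x)))" by (rule size_mset[symmetric])
  also have "\<dots> = size (mset (filter ((<) t) ?L))"
    unfolding type_of_arr_def mset_filter by simp
  also have "filter ((<) t) ?L = filter ((<) t) (map x [0..<2*N])"
    by (simp add: filter_filter) (rule filter_cong, auto)
  also have "size (mset \<dots>) = length (filter ((<) t) (map x [0..<2*N]))" by (rule size_mset)
  also have "\<dots> = cnt N x t"
    unfolding cnt_def length_filter_conv_card by (simp cong: conj_cong)
  finally show ?thesis .
qed

lemma type_key:
  assumes "i < 2*N"
  shows "(t < ent (type_of_arr N x) i) \<longleftrightarrow> i < cnt N x t"
proof -
  let ?X = "type_of_arr N x"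
  let ?S = "{j. j < length ?X \<and> t < ?X ! j}"
  have "?S = {..<card ?S}"
  proof (rule downclosed)
    show "finite ?S" by simp
    fix i j assume "i \<in> ?S" "j \<le> i"
    thus "j \<in> ?S" using type_sorted[of N x]
      by (auto simp: sorted_wrt_iff_nth_less le_less intro: less_le_trans)
  qed
  hence "i \<in> ?S \<longleftrightarrow> i < cnt N x t" using type_cnt[of N x t] by auto
  thus ?thesis by (auto simp: ent_def)
qed

lemma ent_le:
  assumes "\<And>i. i < 2*N \<Longrightarrow> x i \<le> M"
  shows "ent (type_of_arr N x) i \<le> M"
proof (cases "i < length (type_of_arr N x)")
  case True
  hence "type_of_arr N x ! i \<in> x ` {..<2*N}" using type_set[of N x] nth_mem by blast
  thus ?thesis using assms True by (auto simp: ent_def)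
qed (simp add: ent_def)

lemma cnt_le: "cnt N x t \<le> 2*N"
proof -
  have "{i. i < 2*N \<and> t < x i} \<subseteq> {..<2*N}" by auto
  from card_mono[OF _ this] show ?thesis unfolding cnt_def by simp
qed

lemma sort_dist:
  "(\<Sum>i<2*N. \<bar>real (ent (type_of_arr N x) i) - real (ent (type_of_arr N y) i)\<bar>)
   \<le> (\<Sum>i<2*N. \<bar>real (x i) - real (y i)\<bar>)"
proof -
  define M where "M = (\<Sum>i<2*N. x i + y i)"
  have xM: "x i \<le> M" if "i < 2*N" for i
  proof -
    have "x i + y i \<le> M" unfolding M_def using that
      by (intro member_le_sum) auto
    thus ?thesis by simp
  qed
  have yM: "y i \<le> M" if "i < 2*N" for i
  proof -
    have "x i + y i \<le> M" unfolding M_def using that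
      by (intro member_le_sum) auto
    thus ?thesis by simp
  qed
  have eX: "ent (type_of_arr N x) i \<le> M" for i by (rule ent_le) (use xM in auto)
  have eY: "ent (type_of_arr N y) i \<le> M" for i by (rule ent_le) (use yM in auto)
  have "(\<Sum>i<2*N. \<bar>real (ent (type_of_arr N x) i) - real (ent (type_of_arr N y) i)\<bar>)
      = (\<Sum>i<2*N. \<Sum>t<M. \<bar>of_bool (t < ent (type_of_arr N x) i) - of_bool (t < ent (type_of_arr N y) i) :: real\<bar>)"
    by (rule sum.cong[OF refl], rule ind_sum[symmetric, OF eX eY])
  also have "\<dots> = (\<Sum>i<2*N. \<Sum>t<M. \<bar>of_bool (i < cnt N x t) - of_bool (i < cnt N y t) :: real\<bar>)"
    by (intro sum.cong refl) (simp add: type_key)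
  also have "\<dots> = (\<Sum>t<M. \<Sum>i<2*N. \<bar>of_bool (i < cnt N x t) - of_bool (i < cnt N y t) :: real\<bar>)"
    by (rule sum.swap)
  also have "\<dots> = (\<Sum>t<M. \<bar>real (cnt N x t) - real (cnt N y t)\<bar>)"
    by (intro sum.cong refl ind_sum cnt_le)
  also have "\<dots> \<le> (\<Sum>t<M. \<Sum>i<2*N. \<bar>of_bool (t < x i) - of_bool (t < y i) :: real\<bar>)"
  proof (rule sum_mono)
    fix t
    have cx: "real (cnt N x t) = (\<Sum>i<2*N. of_bool (t < x i))"
      by (simp add: cnt_def lessThan_def Int_def conj_commute)
    have cy: "real (cnt N y t) = (\<Sum>i<2*N. of_bool (t < y i))"
      by (simp add: cnt_def lessThan_def Int_def conj_commute)
    have "\<bar>real (cnt N x t) - real (cnt N y t)\<bar> = \<bar>\<Sum>i<2*N. (of_bool (t < x i) - of_bool (t < y i) :: real)\<bar>"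
      by (simp add: cx cy sum_subtractf)
    also have "\<dots> \<le> (\<Sum>i<2*N. \<bar>of_bool (t < x i) - of_bool (t < y i) :: real\<bar>)"
      by (rule sum_abs)
    finally show "\<bar>real (cnt N x t) - real (cnt N y t)\<bar> \<le> (\<Sum>i<2*N. \<bar>of_bool (t < x i) - of_bool (t < y i) :: real\<bar>)" .
  qed
  also have "\<dots> = (\<Sum>i<2*N. \<Sum>t<M. \<bar>of_bool (t < x i) - of_bool (t < y i) :: real\<bar>)"
    by (rule sum.swap)
  also have "\<dots> = (\<Sum>i<2*N. \<bar>real (x i) - real (y i)\<bar>)"
    by (intro sum.cong refl ind_sum xM yM) auto
  finally show ?thesis .
qed

lemma step_facts:
  fixes a a' b :: "nat \<Rightarrow> nat"
  assumes I: "I = {i. i < 2*N \<and> a i \<ge> b i + s \<and> a i > s}"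
    and inj: "inj_on f I" and fI: "f ` I \<subseteq> {j. j < 2*N \<and> a j = 0 \<and> b j = 0}"
    and a': "a' = (\<lambda>k. if k \<in> I then a k - s else if k \<in> f ` I then s else a k)"
  shows "(\<Sum>i<2*N. \<bar>real (a' i) - real (a i)\<bar>) = 2 * real s * real (card I)"
    and "(\<Sum>i<2*N. real (a' i)) = (\<Sum>i<2*N. real (a i))"
proof -
  have dis: "I \<inter> f ` I = {}" using I fI by auto
  have Isub: "I \<subseteq> {..<2*N}" using I by auto
  have fIsub: "f ` I \<subseteq> {..<2*N}" using fI by auto
  have cf: "card (f ` I) = card I" using card_image[OF inj] .
  have d: "real (a' i) = real (a i) - real s * of_bool (i \<in> I) + real s * of_bool (i \<in> f ` I)" for i
    using dis I fI by (auto simp: a' of_nat_diff)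
  have sI: "(\<Sum>i<2*N. real s * of_bool (i \<in> I)) = real s * real (card I)"
    using Isub by (simp add: Int_absorb1 flip: sum_distrib_left)
  have sfI: "(\<Sum>i<2*N. real s * of_bool (i \<in> f ` I)) = real s * real (card I)"
    using fIsub cf by (simp add: Int_absorb1 flip: sum_distrib_left)
  have "(\<Sum>i<2*N. \<bar>real (a' i) - real (a i)\<bar>)
      = (\<Sum>i<2*N. real s * of_bool (i \<in> I) + real s * of_bool (i \<in> f ` I))"
    by (rule sum.cong[OF refl]) (use dis in \<open>auto simp: d\<close>)
  also have "\<dots> = 2 * real s * real (card I)" by (simp add: sum.distrib sI sfI)
  finally show "(\<Sum>i<2*N. \<bar>real (a' i) - real (a i)\<bar>) = 2 * real s * real (card I)" .
  have "(\<Sum>i<2*N. real (a' i)) = (\<Sum>i<2*N. real (a i) - real s * of_bool (i \<in> I) + real s * of_bool (i \<in> f ` I))"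
    by (simp add: d)
  also have "\<dots> = (\<Sum>i<2*N. real (a i))"
    by (simp add: sum.distrib sum_subtractf sI sfI)
  finally show "(\<Sum>i<2*N. real (a' i)) = (\<Sum>i<2*N. real (a i))" .
qed

lemma inv_step:
  fixes a a' b a0 :: "nat \<Rightarrow> nat"
  assumes I: "I = {i. i < 2*N \<and> a i \<ge> b i + s' \<and> a i > s'}"
    and fI: "f ` I \<subseteq> {j. j < 2*N \<and> a j = 0 \<and> b j = 0}"
    and a': "a' = (\<lambda>k. if k \<in> I then a k - s' else if k \<in> f ` I then s' else a k)"
    and ss: "s' \<le> s"
    and inv: "\<forall>i<2*N. \<not>(a0 i = 0 \<and> b i = 0) \<longrightarrow> a i \<le> a0 i \<and> (a i \<noteq> a0 i \<longrightarrow> b i \<le> a i \<and> b i + s \<le> a0 i)"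
  shows "\<forall>i<2*N. \<not>(a0 i = 0 \<and> b i = 0) \<longrightarrow> a' i \<le> a0 i \<and> (a' i \<noteq> a0 i \<longrightarrow> b i \<le> a' i \<and> b i + s' \<le> a0 i)"
proof (intro allI impI)
  fix i assume i: "i < 2*N" and old: "\<not>(a0 i = 0 \<and> b i = 0)"
  note iv = inv[rule_format, OF i old]
  show "a' i \<le> a0 i \<and> (a' i \<noteq> a0 i \<longrightarrow> b i \<le> a' i \<and> b i + s' \<le> a0 i)"
  proof (cases "i \<in> I")
    case True
    then show ?thesis using iv I a' by auto
  next
    case nI: False
    show ?thesis
    proof (cases "i \<in> f ` I")
      case True
      hence "a i = 0" "b i = 0" using fI by auto
      then show ?thesis using iv a' nI True old ss by auto
    next
      case False
      then show ?thesis using iv a' nI ss by auto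
    qed
  qed
qed

lemma per_i:
  fixes x y z s s' q Tc :: real
  assumes "0 \<le> x" "0 \<le> y" "0 \<le> z" "0 < Tc" "4*q \<le> 3*s" "s \<le> s'" "\<bar>x - y\<bar> \<le> q + (x+y)/Tc"
    and old: "\<not>(x = 0 \<and> y = 0) \<Longrightarrow> z \<le> x \<and> (z \<noteq> x \<longrightarrow> y \<le> z \<and> y + s' \<le> x)"
    and inI: "P \<Longrightarrow> y + s \<le> z"
  shows "(if P then z - y else 0) + x - z \<le> 4*((x+y)/Tc)"
proof -
  define R where "R = (x+y)/Tc"
  have R: "0 \<le> R" "\<bar>x - y\<bar> \<le> q + R" using assms unfolding R_def by auto
  have big: "x - y \<le> 4*R" if "s \<le> x - y"
    using R assms(5) that by (cases "x < y") (auto simp: abs_if)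
  have "(if P then z - y else 0) + x - z \<le> 4*R"
  proof (cases "x = 0 \<and> y = 0")
    case True thus ?thesis using R assms(3) by auto
  next
    case False
    note o = old[OF False]
    show ?thesis
    proof (cases "z = x")
      case True thus ?thesis using R inI big by auto
    next
      case False
      hence "y \<le> z" "y + s' \<le> x" using o by auto
      thus ?thesis using big assms(6) o by auto
    qed
  qed
  thus ?thesis unfolding R_def .
qed

lemma len_le_sum: "0 \<notin> set xs \<Longrightarrow> length xs \<le> sum_list (xs::nat list)"
  by (induction xs) auto

lemma pad_sum:
  assumes "is_type N A"
  shows "(\<Sum>i<2*N. real (pad N A i)) = real N"
proof -
  have len: "length A \<le> 2*N" using len_le_sum[of A] assms unfolding is_type_def by auto
  have "(\<Sum>i<2*N. real (pad N A i)) = (\<Sum>i<2*N. real (ent A i))"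
    by (rule sum.cong) (auto simp: pad_def)
  also have "\<dots> = (\<Sum>i<length A. real (ent A i))"
    by (rule sum.mono_neutral_right) (use len in \<open>auto simp: ent_def\<close>)
  also have "\<dots> = (\<Sum>i<length A. real (A ! i))"
    by (rule sum.cong) (auto simp: ent_def)
  also have "\<dots> = real (sum_list A)"
    by (simp add: sum_list_sum_nth lessThan_atLeast0)
  finally show ?thesis using assms unfolding is_type_def by simp
qed

lemma chopP_facts: "\<exists>k. chopP N = 2^k \<and> N \<le> 2^k \<and> (N \<ge> 1 \<longrightarrow> chopL N \<le> k)"
proof -
  have ex: "\<exists>p. (\<exists>k. p = (2::nat)^k) \<and> N \<le> p"
    by (rule exI[of _ "2^N"]) (auto intro: less_imp_le less_exp)
  from LeastI_ex[OF ex] obtain k where k: "chopP N = 2^k" "N \<le> 2^k"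
    unfolding chopP_def by auto
  have "chopL N \<le> k" if "N \<ge> 1"
  proof -
    have "log 2 (real N) \<le> log 2 (2^k)"
    proof -
      have "real N \<le> 2^k" using k(2) by (metis of_nat_le_iff of_nat_numeral of_nat_power)
      thus ?thesis using that by (intro log_mono) auto
    qed
    also have "\<dots> = real k" by (simp add: log_nat_power)
    finally show ?thesis unfolding chopL_def by (simp add: ceiling_le_iff nat_le_iff)
  qed
  thus ?thesis using k by auto
qed

lemma type_dist_le:
  "type_dist N (type_of_arr N x) (type_of_arr N y) \<le> (1/2) * (\<Sum>i<2*N. \<bar>real (x i) - real (y i)\<bar>)"
proof -
  have "(\<Sum>i<N. \<bar>real (ent (type_of_arr N x) i) - real (ent (type_of_arr N y) i)\<bar>)
     \<le> (\<Sum>i<2*N. \<bar>real (ent (type_of_arr N x) i) - real (ent (type_of_arr N y) i)\<bar>)"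
    by (rule sum_mono2) auto
  also have "\<dots> \<le> (\<Sum>i<2*N. \<bar>real (x i) - real (y i)\<bar>)" by (rule sort_dist)
  finally show ?thesis unfolding type_dist_def by simp
qed

theorem lemma14:
  fixes N :: nat and T c :: real and A B :: "nat list" and arr :: "nat \<Rightarrow> nat \<Rightarrow> nat"
  assumes "N \<ge> 1" and "T > 0" and "0 < c" and "c \<le> 1"
    and "is_type N A" and "is_type N B"
    and "\<forall>i. \<bar>real (ent A i) - real (ent B i)\<bar>
              \<le> 3 * real N / T + (real (ent A i) + real (ent B i)) / T powr c"
    and "chop_run N A B arr"
  shows "\<forall>l\<in>{1..chopL N}. real l \<le> log 2 T - 2 \<longrightarrow>
           type_dist N (type_of_arr N (arr l)) (type_of_arr N (arr (l - 1))) \<le> 8 * real N / T powr c"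
proof (intro ballI impI)
  fix l assume lL: "l \<in> {1..chopL N}" and lT: "real l \<le> log 2 T - 2"
  define a0 where "a0 = pad N A"
  define b where "b = pad N B"
  define sk where "sk = (\<lambda>k. chopP N div 2^k)"
  define L where "L = chopL N"
  have run0: "arr 0 = a0" using assms(8) unfolding chop_run_def a0_def by simp
  have runS: "chop_step N (sk l') b (arr (l' - 1)) (arr l')" if "l' \<in> {1..L}" for l'
    using assms(8) that unfolding chop_run_def sk_def b_def L_def by blast
  have skmono: "sk (Suc k) \<le> sk k" for k
    unfolding sk_def by (rule div_le_mono2) auto
  have inv: "(\<Sum>i<2*N. real (arr k i)) = (\<Sum>i<2*N. real (a0 i)) \<and>
     (\<forall>i<2*N. \<not>(a0 i = 0 \<and> b i = 0) \<longrightarrow> arr k i \<le> a0 i \<and> (arr k i \<noteq> a0 i \<longrightarrow> b i \<le> arr k i \<and> b i + sk k \<le> a0 i))"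
    if "k \<le> L" for k
    using that
  proof (induction k)
    case 0 thus ?case using run0 by simp
  next
    case (Suc k)
    hence IH: "(\<Sum>i<2*N. real (arr k i)) = (\<Sum>i<2*N. real (a0 i))"
      "\<forall>i<2*N. \<not>(a0 i = 0 \<and> b i = 0) \<longrightarrow> arr k i \<le> a0 i \<and> (arr k i \<noteq> a0 i \<longrightarrow> b i \<le> arr k i \<and> b i + sk k \<le> a0 i)"
      by auto
    have "chop_step N (sk (Suc k)) b (arr k) (arr (Suc k))"
      using runS[of "Suc k"] Suc.prems by simp
    then obtain f where
      inj: "inj_on f {i. i < 2*N \<and> arr k i \<ge> b i + sk (Suc k) \<and> arr k i > sk (Suc k)}"
      and fI: "f ` {i. i < 2*N \<and> arr k i \<ge> b i + sk (Suc k) \<and> arr k i > sk (Suc k)} \<subseteq> {j. j < 2*N \<and> arr k j = 0 \<and> b j = 0}"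
      and a': "arr (Suc k) = (\<lambda>j. if j \<in> {i. i < 2*N \<and> arr k i \<ge> b i + sk (Suc k) \<and> arr k i > sk (Suc k)} then arr k j - sk (Suc k)
           else if j \<in> f ` {i. i < 2*N \<and> arr k i \<ge> b i + sk (Suc k) \<and> arr k i > sk (Suc k)} then sk (Suc k) else arr k j)"
      unfolding chop_step_def Let_def by blast
    have "(\<Sum>i<2*N. real (arr (Suc k) i)) = (\<Sum>i<2*N. real (arr k i))"
      by (rule step_facts(2)[OF refl inj fI a'])
    moreover have "\<forall>i<2*N. \<not>(a0 i = 0 \<and> b i = 0) \<longrightarrow> arr (Suc k) i \<le> a0 i \<and> (arr (Suc k) i \<noteq> a0 i \<longrightarrow> b i \<le> arr (Suc k) i \<and> b i + sk (Suc k) \<le> a0 i)"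
      by (rule inv_step[OF refl fI a' skmono IH(2)])
    ultimately show ?case using IH(1) by simp
  qed
  have l1: "1 \<le> l" "l \<le> L" using lL unfolding L_def by auto
  obtain k where k: "chopP N = 2^k" "N \<le> 2^k" "L \<le> k"
    using chopP_facts[of N] assms(1) unfolding L_def by auto
  have skl: "sk l * 2^l = 2^k" unfolding sk_def k(1) using l1 k(3)
  proof -
    have "(2::nat)^l dvd 2^k" using l1 k(3) by (intro le_imp_power_dvd) simp
    thus "2 ^ k div 2 ^ l * 2 ^ l = (2::nat) ^ k" by simp
  qed
  have "2 powr real l \<le> 2 powr (log 2 T - 2)" using lT by simp
  also have "\<dots> = T / 4" using assms(2) by (simp add: powr_diff)
  finally have pl: "(2::real)^l \<le> T/4" by (simp add: powr_realpow)
  have "real N \<le> real (sk l) * 2^l"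
    using k(2) skl by (metis of_nat_le_iff of_nat_mult of_nat_numeral of_nat_power)
  also have "\<dots> \<le> real (sk l) * (T/4)" using pl by (intro mult_left_mono) auto
  finally have NT: "real N \<le> real (sk l) * (T/4)" .
  have q: "4 * (3 * real N / T) \<le> 3 * real (sk l)"
    using NT assms(2) by (simp add: field_simps)
  let ?a = "arr (l - 1)" and ?a' = "arr l" and ?s = "sk l"
  have "chop_step N ?s b ?a ?a'" using runS l1 by simp
  then obtain f where
    inj: "inj_on f {i. i < 2*N \<and> ?a i \<ge> b i + ?s \<and> ?a i > ?s}"
    and fI: "f ` {i. i < 2*N \<and> ?a i \<ge> b i + ?s \<and> ?a i > ?s} \<subseteq> {j. j < 2*N \<and> ?a j = 0 \<and> b j = 0}"
    and a': "?a' = (\<lambda>j. if j \<in> {i. i < 2*N \<and> ?a i \<ge> b i + ?s \<and> ?a i > ?s} then ?a j - ?s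
         else if j \<in> f ` {i. i < 2*N \<and> ?a i \<ge> b i + ?s \<and> ?a i > ?s} then ?s else ?a j)"
    unfolding chop_step_def Let_def by blast
  define I where "I = {i. i < 2*N \<and> ?a i \<ge> b i + ?s \<and> ?a i > ?s}"
  have ssum: "(\<Sum>i<2*N. \<bar>real (?a' i) - real (?a i)\<bar>) = 2 * real ?s * real (card I)"
    unfolding I_def by (rule step_facts(1)[OF refl inj fI a'])
  have invl: "(\<Sum>i<2*N. real (?a i)) = (\<Sum>i<2*N. real (a0 i))"
    "\<forall>i<2*N. \<not>(a0 i = 0 \<and> b i = 0) \<longrightarrow> ?a i \<le> a0 i \<and> (?a i \<noteq> a0 i \<longrightarrow> b i \<le> ?a i \<and> b i + sk (l-1) \<le> a0 i)"
    using inv[of "l-1"] l1 by auto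
  have sls: "sk l \<le> sk (l - 1)" using skmono[of "l-1"] l1 by simp
  have Tc: "0 < T powr c" using assms(2) by simp
  have Isub: "I \<subseteq> {..<2*N}" unfolding I_def by auto
  have "real ?s * real (card I) = (\<Sum>i\<in>I. real ?s)" by simp
  also have "\<dots> \<le> (\<Sum>i\<in>I. real (?a i) - real (b i))"
    by (rule sum_mono) (auto simp: I_def)
  also have "\<dots> = (\<Sum>i<2*N. (if i \<in> I then real (?a i) - real (b i) else 0))"
  proof -
    have "(\<Sum>i<2*N. (if i \<in> I then real (?a i) - real (b i) else 0)) = (\<Sum>i\<in>{..<2*N} \<inter> I. real (?a i) - real (b i))"
      by (rule sum.inter_restrict[symmetric]) simp
    also have "{..<2*N} \<inter> I = I" using Isub by auto
    finally show ?thesis by simp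
  qed
  also have "\<dots> = (\<Sum>i<2*N. (if i \<in> I then real (?a i) - real (b i) else 0) + real (a0 i) - real (?a i))"
    using invl(1) by (simp add: sum.distrib sum_subtractf)
  also have "\<dots> \<le> (\<Sum>i<2*N. 4 * ((real (a0 i) + real (b i)) / T powr c))"
  proof (rule sum_mono)
    fix i assume i: "i \<in> {..<2*N}"
    have hyp: "\<bar>real (a0 i) - real (b i)\<bar> \<le> 3 * real N / T + (real (a0 i) + real (b i)) / T powr c"
      using assms(7) i unfolding a0_def b_def pad_def by auto
    show "(if i \<in> I then real (?a i) - real (b i) else 0) + real (a0 i) - real (?a i)
          \<le> 4 * ((real (a0 i) + real (b i)) / T powr c)"
    proof (rule per_i[where s = "real ?s" and s' = "real (sk (l-1))" and q = "3 * real N / T"])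
      show "4 * (3 * real N / T) \<le> 3 * real ?s" by (rule q)
      show "real ?s \<le> real (sk (l-1))" using sls by simp
      show "\<not> (real (a0 i) = 0 \<and> real (b i) = 0) \<Longrightarrow>
         real (?a i) \<le> real (a0 i) \<and> (real (?a i) \<noteq> real (a0 i) \<longrightarrow> real (b i) \<le> real (?a i) \<and> real (b i) + real (sk (l-1)) \<le> real (a0 i))"
        using invl(2) i by auto
      show "i \<in> I \<Longrightarrow> real (b i) + real ?s \<le> real (?a i)" unfolding I_def by auto
    qed (use hyp Tc in auto)
  qed
  also have "\<dots> = 4 * (((\<Sum>i<2*N. real (a0 i)) + (\<Sum>i<2*N. real (b i))) / T powr c)"
    by (simp add: sum_distrib_left sum_divide_distrib sum.distrib add_divide_distrib)
  also have "\<dots> = 8 * real N / T powr c"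
    using pad_sum[OF assms(5)] pad_sum[OF assms(6)] unfolding a0_def b_def by simp
  finally have main: "real ?s * real (card I) \<le> 8 * real N / T powr c" .
  have "type_dist N (type_of_arr N ?a') (type_of_arr N ?a) \<le> (1/2) * (\<Sum>i<2*N. \<bar>real (?a' i) - real (?a i)\<bar>)"
    by (rule type_dist_le)
  also have "\<dots> = real ?s * real (card I)" using ssum by simp
  finally show "type_dist N (type_of_arr N ?a') (type_of_arr N ?a) \<le> 8 * real N / T powr c"
    using main by linarith
qed

end
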